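(* Let $p,q,r>0$ with $p+q+r=1$ and $q>p$. Consider the nearest-neighbor Markov chain on $\Omega=\{0,1,2,\dots\}$ with transition probabilities $P(0,1)=1$ and, for $n\ge 1$, $P(n,n-1)=q$, $P(n,n)=r$, $P(n,n+1)=p$, started at $X_0=0$. Let $Q_n$ be its orthogonal polynomials and $\psi$ its spectral measure (as defined in the context), let $\nu$ be its stationary distribution and $\mu_t$ the distribution of $X_t$. Then for all integers $t,n\ge 0$, $$\int_{(-1,1)} \lambda^t Q_n(\lambda)\, d\psi(\lambda) = \frac{(1+q-p)(q+r)-q}{(1+q-p)(q+r)}\left(-\frac{q}{q+r}\right)^{t+n} + \left(\sqrt{\frac{q}{p}}\right)^n \frac{p}{q+r}\cdot \frac{1}{2\pi i}\oint_{|z|=1}\frac{\left(\sqrt{pq}(z+z^{-1})+r\right)^t z^n (z-z^{-1})}{\left(z-\sqrt{\frac{p}{q}}\frac{r+(1+q-p)}{2(q+r)}\right)\left(z-\sqrt{\frac{p}{q}}\frac{r-(1+q-p)}{2(q+r)}\right)}\,dz,$$ and for every $t\ge 0$ the total variation distance satisfies $$\|\nu-\mu_t\|_{TV}\le A\left(\frac{q}{q+r}\right)^t + B\left(r+2\sqrt{pq}\right)^t,$$ where $$A=\frac{(1+q-p)(q+r)-q}{(1+q-p)(1-2p)},\qquad B=\frac{\frac{p}{q+r}\left(1+\frac{1}{\sqrt{pq}-p}\right)}{\left(1-\sqrt{\frac{p}{q}}\frac{r+(1+q-p)}{2(q+r)}\right)\left(1+\sqrt{\frac{p}{q}}\frac{r-(1+q-p)}{2(q+r)}\right)}.$$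 Consequently, as $\varepsilon\downarrow 0$, the mixing time satisfies $t_{mix}(\varepsilon)=O\!\left(\frac{\log \varepsilon}{\log m(p,q)}\right)$, where $m(p,q)=\max\left[r+2\sqrt{pq},\ \frac{q}{q+r}\right]$.
   Context: The contour $|z|=1$ is traversed counterclockwise. Reversibility measure: $\pi_0=1$, $\pi_n=p^{n-1}/q^n$ for $n\ge1$; $\rho=\sum_{n\ge0}\pi_n$ and the stationary distribution is $\nu=\pi/\rho$. Orthogonal polynomials: $Q_0(\lambda)=1$, $Q_1(\lambda)=\lambda$, and $\lambda Q_n(\lambda)=qQ_{n-1}(\lambda)+rQ_n(\lambda)+pQ_{n+1}(\lambda)$ for $n\ge1$ (so $(Q_n(\lambda))_n$ is the formal eigenvector $PQ=\lambda Q$). The spectral measure $\psi$ is the (Karlin–McGregor) probability measure on $[-1,1]$ for which $\int Q_iQ_j\,d\psi=\delta_{ij}/\pi_j$, equivalently $P^t(i,j)=\pi_j\int_{-1}^1\lambda^tQ_i(\lambda)Q_j(\lambda)\,d\psi(\lambda)$ for all $i,j,t$; the integral in the claim is over the open interval $(-1,1)$, excluding the atom at $1$. Total variation distance: $\|\nu-\mu\|_{TV}=\frac12\sum_{x\in\Omega}|\nu(x)-\mu(x)|$. Mixing time (from $X_0=0$): $t_{mix}(\varepsilon)=\min\{t:\|\nu-\mu_t\|_{TV}\le\varepsilon\}$. *)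

theory Defs
  imports "HOL-Complex_Analysis.Complex_Analysis" "HOL-Probability.Probability"
    "HOL-Library.Landau_Symbols"
begin

definition bdP :: "real \<Rightarrow> real \<Rightarrow> real \<Rightarrow> nat \<Rightarrow> nat \<Rightarrow> real" where
  "bdP p q r i j =
     (if i = 0 then (if j = 1 then 1 else 0)
      else if j = i - 1 then q
      else if j = i then r
      else if j = i + 1 then p
      else 0)"

text \<open>t-step transition probabilities P^t(i,j) (matrix power; the chain is
  nearest-neighbour so the sum over intermediate states is finite).\<close>
fun bdPt :: "real \<Rightarrow> real \<Rightarrow> real \<Rightarrow> nat \<Rightarrow> nat \<Rightarrow> nat \<Rightarrow> real" where
  "bdPt p q r 0 i j = (if i = j then 1 else 0)"
| "bdPt p q r (Suc t) i j = (\<Sum>k\<le>i + 1. bdP p q r i k * bdPt p q r t k j)"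

definition mu :: "real \<Rightarrow> real \<Rightarrow> real \<Rightarrow> nat \<Rightarrow> nat \<Rightarrow> real" where
  "mu p q r t x = bdPt p q r t 0 x"

definition piw :: "real \<Rightarrow> real \<Rightarrow> nat \<Rightarrow> real" where
  "piw p q n = (if n = 0 then 1 else p ^ (n - 1) / q ^ n)"

definition rho :: "real \<Rightarrow> real \<Rightarrow> real" where
  "rho p q = (\<Sum>n. piw p q n)"

definition nu :: "real \<Rightarrow> real \<Rightarrow> nat \<Rightarrow> real" where
  "nu p q n = piw p q n / rho p q"

fun Qpoly :: "real \<Rightarrow> real \<Rightarrow> real \<Rightarrow> nat \<Rightarrow> real \<Rightarrow> real" where
  "Qpoly p q r 0 x = 1"
| "Qpoly p q r (Suc 0) x = x"
| "Qpoly p q r (Suc (Suc n)) x =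
     (x * Qpoly p q r (Suc n) x - q * Qpoly p q r n x - r * Qpoly p q r (Suc n) x) / p"

definition is_spectral_measure :: "real \<Rightarrow> real \<Rightarrow> real \<Rightarrow> real measure \<Rightarrow> bool" where
  "is_spectral_measure p q r \<psi> \<longleftrightarrow>
     prob_space \<psi> \<and> sets \<psi> = sets borel \<and> emeasure \<psi> (- {-1..1}) = 0 \<and>
     (\<forall>i j. (\<integral>x. Qpoly p q r i x * Qpoly p q r j x \<partial>\<psi>) =
             (if i = j then 1 / piw p q j else 0))"

definition tv_dist :: "real \<Rightarrow> real \<Rightarrow> real \<Rightarrow> nat \<Rightarrow> real" where
  "tv_dist p q r t = (1/2) * (\<Sum>x. \<bar>nu p q x - mu p q r t x\<bar>)"

definition tmix :: "real \<Rightarrow> real \<Rightarrow> real \<Rightarrow> real \<Rightarrow> nat" where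
  "tmix p q r \<epsilon> = (LEAST t. tv_dist p q r t \<le> \<epsilon>)"

end

theory Submission
  imports Defs
begin

lemma bdP_far: "j > i + 1 \<Longrightarrow> bdP p q r i j = 0"
  by (auto simp: bdP_def)

lemma bdPt_far: "j > i + t \<Longrightarrow> bdPt p q r t i j = 0"
proof (induction t arbitrary: i)
  case 0 then show ?case by simp
next
  case (Suc t)
  have "bdPt p q r t k j = 0" if "k \<le> i + 1" for k using Suc that by auto
  then show ?case by simp
qed

lemma bdPt_CK_last:
  "bdPt p q r (Suc t) i j = (\<Sum>k\<le>i+t. bdPt p q r t i k * bdP p q r k j)"
proof (induction t arbitrary: i)
  case 0
  have "(\<Sum>k\<le>i + 1. bdP p q r i k * (if k = j then 1 else 0)) = (\<Sum>k\<le>i + 1. (if k = j then bdP p q r i k else 0))"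
    by (rule sum.cong) auto
  also have "\<dots> = bdP p q r i j"
    by (cases "j \<le> i + 1") (auto simp: bdP_far sum.delta)
  finally have 1: "bdPt p q r (Suc 0) i j = bdP p q r i j" by simp
  have "(\<Sum>k\<le>i+0. bdPt p q r 0 i k * bdP p q r k j) = (\<Sum>k\<le>i. (if k = i then bdP p q r k j else 0))"
    by (rule sum.cong) auto
  also have "\<dots> = bdP p q r i j" by (simp add: sum.delta)
  finally show ?case using 1 by simp
next
  case (Suc t)
  have "bdPt p q r (Suc (Suc t)) i j
        = (\<Sum>k\<le>i+1. bdP p q r i k * (\<Sum>l\<le>k+t. bdPt p q r t k l * bdP p q r l j))"
    by (subst bdPt.simps(2)) (simp only: Suc.IH)
  also have "\<dots> = (\<Sum>k\<le>i+1. bdP p q r i k * (\<Sum>l\<le>i+Suc t. bdPt p q r t k l * bdP p q r l j))"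
  proof (rule sum.cong[OF refl])
    fix k assume k: "k \<in> {..i+1}"
    have "(\<Sum>l\<le>k+t. bdPt p q r t k l * bdP p q r l j) = (\<Sum>l\<le>i+Suc t. bdPt p q r t k l * bdP p q r l j)"
      by (rule sum.mono_neutral_left) (use k in \<open>auto simp: bdPt_far\<close>)
    then show "bdP p q r i k * (\<Sum>l\<le>k+t. bdPt p q r t k l * bdP p q r l j) =
          bdP p q r i k * (\<Sum>l\<le>i+Suc t. bdPt p q r t k l * bdP p q r l j)" by simp
  qed
  also have "\<dots> = (\<Sum>l\<le>i+Suc t. (\<Sum>k\<le>i+1. bdP p q r i k * bdPt p q r t k l) * bdP p q r l j)"
    by (simp only: sum_distrib_left sum_distrib_right mult.assoc) (rule sum.swap)
  also have "\<dots> = (\<Sum>l\<le>i+Suc t. bdPt p q r (Suc t) i l * bdP p q r l j)"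
    by simp
  finally show ?case .
qed

lemma bdP_far2: "i + 1 < j \<Longrightarrow> bdP p q r j i = 0"
  by (auto simp: bdP_def)

lemma piw_bdP:
  assumes "p > 0" "q > 0"
  shows "piw p q i * bdP p q r i j = piw p q j * bdP p q r j i"
proof -
  consider "j = i" | "j = i + 1" | "i = j + 1" | "j > i + 1" | "i > j + 1" by linarith
  then show ?thesis
  proof cases
    case 2 then show ?thesis using assms
      by (cases i) (simp_all add: piw_def bdP_def)
  next
    case 3 then show ?thesis using assms
      by (cases j) (simp_all add: piw_def bdP_def)
  qed (auto simp: bdP_far bdP_far2)
qed

lemma piw_bdPt:
  assumes "p > 0" "q > 0"
  shows "piw p q i * bdPt p q r t i j = piw p q j * bdPt p q r t j i"
proof (induction t arbitrary: i j)
  case 0 then show ?case by simp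
next
  case (Suc t)
  have "piw p q i * bdPt p q r (Suc t) i j
     = (\<Sum>k\<le>i+1. (piw p q i * bdP p q r i k) * bdPt p q r t k j)"
    by (simp only: bdPt.simps(2) sum_distrib_left mult.assoc)
  also have "\<dots> = (\<Sum>k\<le>i+1. bdP p q r k i * (piw p q k * bdPt p q r t k j))"
  proof (rule sum.cong[OF refl])
    fix k
    have e: "piw p q i * bdP p q r i k = piw p q k * bdP p q r k i" by (rule piw_bdP[OF assms])
    show "piw p q i * bdP p q r i k * bdPt p q r t k j = bdP p q r k i * (piw p q k * bdPt p q r t k j)"
      unfolding e by (simp only: mult_ac)
  qed
  also have "\<dots> = (\<Sum>k\<le>i+1. bdP p q r k i * (piw p q j * bdPt p q r t j k))"
    using Suc.IH by simp
  also have "\<dots> = piw p q j * (\<Sum>k\<le>i+1. bdPt p q r t j k * bdP p q r k i)"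
    by (subst sum_distrib_left) (rule sum.cong[OF refl], simp only: mult_ac)
  also have "(\<Sum>k\<le>i+1. bdPt p q r t j k * bdP p q r k i) = (\<Sum>k\<le>i+1+j+t. bdPt p q r t j k * bdP p q r k i)"
    by (rule sum.mono_neutral_left) (auto simp: bdP_far2)
  also have "(\<Sum>k\<le>i+1+j+t. bdPt p q r t j k * bdP p q r k i) = (\<Sum>k\<le>j+t. bdPt p q r t j k * bdP p q r k i)"
    by (rule sum.mono_neutral_right) (auto simp: bdPt_far)
  finally show ?case by (simp only: bdPt_CK_last)
qed

lemma sum_bdP:
  "(\<Sum>k\<le>n+1. bdP p q r n k * f k) =
     (if n = 0 then f 1 else q * f (n-1) + r * f n + p * f (n+1))"
proof (cases n)
  case 0
  then show ?thesis by (simp add: bdP_def)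
next
  case (Suc m)
  have "(\<Sum>k\<le>n+1. bdP p q r n k * f k) = (\<Sum>k\<in>{m, Suc m, Suc (Suc m)}. bdP p q r n k * f k)"
    by (rule sum.mono_neutral_right) (auto simp: Suc bdP_def)
  also have "\<dots> = q * f m + r * f (Suc m) + p * f (Suc (Suc m))"
    by (simp add: Suc bdP_def)
  finally show ?thesis by (simp add: Suc)
qed


definition Fint :: "real \<Rightarrow> real \<Rightarrow> real \<Rightarrow> real \<Rightarrow> nat \<Rightarrow> nat \<Rightarrow> complex \<Rightarrow> complex" where
  "Fint g r a b t n = (\<lambda>z. (complex_of_real g * (z + inverse z) + complex_of_real r) ^ t
                        * z ^ n * (z - inverse z)
                        / ((z - complex_of_real a) * (z - complex_of_real b)))"

lemma ci_pow:
  assumes "norm w < 1"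
  shows "((\<lambda>z. z ^ k / (z - w)) has_contour_integral (2 * of_real pi * \<i> * w ^ k)) (circlepath 0 1)"
proof -
  have "(\<lambda>z. z ^ k) holomorphic_on cball 0 1" by (intro holomorphic_intros)
  then show ?thesis using Cauchy_integral_circlepath_simple[of "\<lambda>z. z ^ k" 0 1 w] assms by simp
qed

lemma ci_two:
  assumes "norm a < 1" "norm b < 1" "a \<noteq> b"
  shows "((\<lambda>z. z ^ k / ((z - a) * (z - b))) has_contour_integral
            (2 * of_real pi * \<i> * ((a ^ k - b ^ k) / (a - b)))) (circlepath 0 1)"
proof -
  have "((\<lambda>z. (z ^ k / (z - a) - z ^ k / (z - b)) / (a - b)) has_contour_integral
            ((2 * of_real pi * \<i> * a ^ k - 2 * of_real pi * \<i> * b ^ k) / (a - b))) (circlepath 0 1)"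
    by (intro has_contour_integral_div has_contour_integral_diff ci_pow assms)
  moreover have "(2 * of_real pi * \<i> * a ^ k - 2 * of_real pi * \<i> * b ^ k) / (a - b)
     = 2 * of_real pi * \<i> * ((a ^ k - b ^ k) / (a - b))" by (simp add: algebra_simps diff_divide_distrib)
  ultimately have "((\<lambda>z. (z ^ k / (z - a) - z ^ k / (z - b)) / (a - b)) has_contour_integral
            (2 * of_real pi * \<i> * ((a ^ k - b ^ k) / (a - b)))) (circlepath 0 1)" by simp
  then show ?thesis
  proof (rule has_contour_integral_eq)
    fix z assume "z \<in> path_image (circlepath 0 1)"
    then have z: "norm z = 1" by simp
    have "z \<noteq> a" "z \<noteq> b" using z assms by auto
    then show "(z ^ k / (z - a) - z ^ k / (z - b)) / (a - b) = z ^ k / ((z - a) * (z - b))"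
      using assms by (simp add: divide_simps) (simp add: algebra_simps)
  qed
qed

lemma ci_inv:
  assumes "norm a < 1" "norm b < 1" "a \<noteq> b" "a \<noteq> 0" "b \<noteq> 0"
  shows "((\<lambda>z. inverse z / ((z - a) * (z - b))) has_contour_integral 0) (circlepath 0 1)"
proof -
  have h0: "((\<lambda>z. z ^ 0 / (z - 0)) has_contour_integral (2 * of_real pi * \<i> * 0 ^ 0)) (circlepath 0 1)"
    by (rule ci_pow) simp
  have ha: "((\<lambda>z. z ^ 0 / (z - a)) has_contour_integral (2 * of_real pi * \<i> * a ^ 0)) (circlepath 0 1)"
    by (rule ci_pow) (use assms in simp)
  have hb: "((\<lambda>z. z ^ 0 / (z - b)) has_contour_integral (2 * of_real pi * \<i> * b ^ 0)) (circlepath 0 1)"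
    by (rule ci_pow) (use assms in simp)
  have "((\<lambda>z. (1/(a*b)) * (z ^ 0 / (z - 0)) + (1/(a*(a-b))) * (z ^ 0 / (z - a)) - (1/(b*(a-b))) * (z ^ 0 / (z - b)))
     has_contour_integral ((1/(a*b)) * (2 * of_real pi * \<i> * 0 ^ 0) + (1/(a*(a-b))) * (2 * of_real pi * \<i> * a ^ 0)
        - (1/(b*(a-b))) * (2 * of_real pi * \<i> * b ^ 0))) (circlepath 0 1)"
    by (intro has_contour_integral_diff has_contour_integral_add has_contour_integral_lmul h0 ha hb)
  moreover have "(1/(a*b)) * (2 * of_real pi * \<i> * 0 ^ 0) + (1/(a*(a-b))) * (2 * of_real pi * \<i> * a ^ 0)
        - (1/(b*(a-b))) * (2 * of_real pi * \<i> * b ^ 0) = 0"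
    using assms by (simp add: field_simps)
  ultimately have "((\<lambda>z. (1/(a*b)) * (z ^ 0 / (z - 0)) + (1/(a*(a-b))) * (z ^ 0 / (z - a)) - (1/(b*(a-b))) * (z ^ 0 / (z - b)))
     has_contour_integral 0) (circlepath 0 1)" by simp
  then show ?thesis
  proof (rule has_contour_integral_eq)
    fix z assume "z \<in> path_image (circlepath 0 1)"
    then have z: "norm z = 1" by simp
    have "z \<noteq> a" "z \<noteq> b" "z \<noteq> 0" using z assms by auto
    then show "(1/(a*b)) * (z ^ 0 / (z - 0)) + (1/(a*(a-b))) * (z ^ 0 / (z - a)) - (1/(b*(a-b))) * (z ^ 0 / (z - b))
       = inverse z / ((z - a) * (z - b))"
      using assms by (simp add: divide_simps) (simp add: algebra_simps)
  qed
qed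

lemma Fint_cont:
  assumes "\<bar>a\<bar> < 1" "\<bar>b\<bar> < 1"
  shows "continuous_on (sphere 0 1) (Fint g r a b t n)"
proof -
  have "\<forall>x\<in>sphere (0::complex) 1. x \<noteq> 0" by auto
  moreover have "\<forall>x\<in>sphere (0::complex) 1. (x - complex_of_real a) * (x - complex_of_real b) \<noteq> 0"
  proof
    fix x :: complex assume "x \<in> sphere 0 1"
    then have "norm x = 1" by simp
    then have "x \<noteq> complex_of_real a" "x \<noteq> complex_of_real b" using assms by auto
    then show "(x - complex_of_real a) * (x - complex_of_real b) \<noteq> 0" by simp
  qed
  ultimately show ?thesis unfolding Fint_def
    by (intro continuous_intros) auto
qed

lemma Fint_has:
  assumes "\<bar>a\<bar> < 1" "\<bar>b\<bar> < 1"
  shows "(Fint g r a b t n has_contour_integral contour_integral (circlepath 0 1) (Fint g r a b t n)) (circlepath 0 1)"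
  by (rule has_contour_integral_integral, rule contour_integrable_continuous_circlepath)
     (use Fint_cont[OF assms] in simp)

lemma Fint_t0:
  assumes "\<bar>a\<bar> < 1" "\<bar>b\<bar> < 1" "a \<noteq> b" "a \<noteq> 0" "b \<noteq> 0"
  shows "contour_integral (circlepath 0 1) (Fint g r a b 0 n) =
     2 * of_real pi * \<i> * complex_of_real
       ((a ^ (n+1) - b ^ (n+1) - (if n = 0 then 0 else a ^ (n-1) - b ^ (n-1))) / (a - b))"
proof -
  have na: "norm (complex_of_real a) < 1" "norm (complex_of_real b) < 1"
    "complex_of_real a \<noteq> complex_of_real b" "complex_of_real a \<noteq> 0" "complex_of_real b \<noteq> 0"
    using assms by auto
  show ?thesis
  proof (cases n)
    case 0
    have "((\<lambda>z. z ^ 1 / ((z - of_real a) * (z - of_real b)) - inverse z / ((z - of_real a) * (z - of_real b)))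
       has_contour_integral
        (2 * of_real pi * \<i> * ((of_real a ^ 1 - of_real b ^ 1) / (of_real a - of_real b)) - 0)) (circlepath 0 1)"
      by (intro has_contour_integral_diff ci_two ci_inv na)
    then have "(Fint g r a b 0 n has_contour_integral
        (2 * of_real pi * \<i> * ((of_real a ^ 1 - of_real b ^ 1) / (of_real a - of_real b)) - 0)) (circlepath 0 1)"
      by (rule has_contour_integral_eq) (auto simp: Fint_def 0 diff_divide_distrib)
    then show ?thesis using 0 by (simp add: contour_integral_unique)
  next
    case (Suc m)
    have "((\<lambda>z. z ^ (m+2) / ((z - of_real a) * (z - of_real b)) - z ^ m / ((z - of_real a) * (z - of_real b)))
       has_contour_integral
        (2 * of_real pi * \<i> * ((of_real a ^ (m+2) - of_real b ^ (m+2)) / (of_real a - of_real b))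
        - 2 * of_real pi * \<i> * ((of_real a ^ m - of_real b ^ m) / (of_real a - of_real b)))) (circlepath 0 1)"
      by (intro has_contour_integral_diff ci_two na)
    then have "(Fint g r a b 0 n has_contour_integral
        (2 * of_real pi * \<i> * ((of_real a ^ (m+2) - of_real b ^ (m+2)) / (of_real a - of_real b))
        - 2 * of_real pi * \<i> * ((of_real a ^ m - of_real b ^ m) / (of_real a - of_real b)))) (circlepath 0 1)"
    proof (rule has_contour_integral_eq)
      fix z :: complex assume "z \<in> path_image (circlepath 0 1)"
      then have "z \<noteq> 0" by auto
      then have "z ^ Suc m * (z - inverse z) = z ^ (m+2) - z ^ m"
        by (simp add: algebra_simps power_Suc)
      then show "z ^ (m+2) / ((z - of_real a) * (z - of_real b)) - z ^ m / ((z - of_real a) * (z - of_real b))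
          = Fint g r a b 0 n z"
        by (simp add: Fint_def Suc diff_divide_distrib)
    qed
    then have ci: "contour_integral (circlepath 0 1) (Fint g r a b 0 n) =
        (2 * of_real pi * \<i> * ((of_real a ^ (m+2) - of_real b ^ (m+2)) / (of_real a - of_real b))
        - 2 * of_real pi * \<i> * ((of_real a ^ m - of_real b ^ m) / (of_real a - of_real b)))"
      by (rule contour_integral_unique)
    have "complex_of_real ((a ^ (n+1) - b ^ (n+1) - (if n = 0 then 0 else a ^ (n-1) - b ^ (n-1))) / (a - b))
       = ((of_real a ^ (m+2) - of_real b ^ (m+2)) / (of_real a - of_real b)) - ((of_real a ^ m - of_real b ^ m) / (of_real a - of_real b))"
      by (simp add: Suc diff_divide_distrib)
    then show ?thesis unfolding ci by (simp add: right_diff_distrib)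
  qed
qed


lemma Fint_rec:
  assumes ab: "\<bar>a\<bar> < 1" "\<bar>b\<bar> < 1" and gs: "q = g * s" "p * s = g"
  shows "complex_of_real q * complex_of_real s ^ m * contour_integral (circlepath 0 1) (Fint g r a b t m)
       + complex_of_real r * complex_of_real s ^ (m+1) * contour_integral (circlepath 0 1) (Fint g r a b t (m+1))
       + complex_of_real p * complex_of_real s ^ (m+2) * contour_integral (circlepath 0 1) (Fint g r a b t (m+2))
       = complex_of_real s ^ (m+1) * contour_integral (circlepath 0 1) (Fint g r a b (t+1) (m+1))"
proof -
  let ?C = "\<lambda>n. contour_integral (circlepath 0 1) (Fint g r a b t n)"
  have "((\<lambda>z. complex_of_real q * complex_of_real s ^ m * Fint g r a b t m z
       + complex_of_real r * complex_of_real s ^ (m+1) * Fint g r a b t (m+1) z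
       + complex_of_real p * complex_of_real s ^ (m+2) * Fint g r a b t (m+2) z) has_contour_integral
       (complex_of_real q * complex_of_real s ^ m * ?C m
       + complex_of_real r * complex_of_real s ^ (m+1) * ?C (m+1)
       + complex_of_real p * complex_of_real s ^ (m+2) * ?C (m+2))) (circlepath 0 1)"
    by (intro has_contour_integral_add has_contour_integral_lmul Fint_has ab)
  then have "((\<lambda>z. complex_of_real s ^ (m+1) * Fint g r a b (t+1) (m+1) z) has_contour_integral
       (complex_of_real q * complex_of_real s ^ m * ?C m
       + complex_of_real r * complex_of_real s ^ (m+1) * ?C (m+1)
       + complex_of_real p * complex_of_real s ^ (m+2) * ?C (m+2))) (circlepath 0 1)"
  proof (rule has_contour_integral_eq)
    fix z :: complex assume "z \<in> path_image (circlepath 0 1)"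
    then have z0: "z \<noteq> 0" by auto
    define A where "A = complex_of_real g * (z + inverse z) + complex_of_real r"
    define W where "W = (z - inverse z) / ((z - complex_of_real a) * (z - complex_of_real b))"
    have F: "Fint g r a b t' n z = A ^ t' * z ^ n * W" for t' n
      by (simp add: Fint_def A_def W_def)
    have q': "complex_of_real q = complex_of_real g * complex_of_real s" using gs by simp
    have p': "complex_of_real p * complex_of_real s ^ (m+2) = complex_of_real g * complex_of_real s ^ (m+1)"
      using gs by (simp add: power_Suc flip: of_real_mult of_real_power)
    have ps': "complex_of_real p * complex_of_real s = complex_of_real g" using gs by (simp flip: of_real_mult)
    have zi: "z ^ (m+1) * inverse z = z ^ m" using z0 by (simp add: power_Suc)
    have key: "complex_of_real q * complex_of_real s ^ m * z ^ m + complex_of_real r * complex_of_real s ^ (m+1) * z ^ (m+1)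
        + complex_of_real p * complex_of_real s ^ (m+2) * z ^ (m+2) = complex_of_real s ^ (m+1) * z ^ (m+1) * A"
    proof -
      have "complex_of_real s ^ (m+1) * z ^ (m+1) * A =
          complex_of_real g * complex_of_real s ^ (m+1) * (z ^ (m+1) * inverse z) + complex_of_real r * complex_of_real s ^ (m+1) * z ^ (m+1)
          + complex_of_real g * complex_of_real s ^ (m+1) * z ^ (m+2)"
        by (simp add: A_def algebra_simps power_Suc)
      also have "\<dots> = complex_of_real q * complex_of_real s ^ m * z ^ m + complex_of_real r * complex_of_real s ^ (m+1) * z ^ (m+1)
        + complex_of_real p * complex_of_real s ^ (m+2) * z ^ (m+2)"
        unfolding zi q' p'[symmetric] using ps' by (simp add: algebra_simps power_Suc)
      finally show ?thesis by simp
    qed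
    have "complex_of_real q * complex_of_real s ^ m * Fint g r a b t m z
       + complex_of_real r * complex_of_real s ^ (m+1) * Fint g r a b t (m+1) z
       + complex_of_real p * complex_of_real s ^ (m+2) * Fint g r a b t (m+2) z
       = A ^ t * W * (complex_of_real q * complex_of_real s ^ m * z ^ m + complex_of_real r * complex_of_real s ^ (m+1) * z ^ (m+1)
        + complex_of_real p * complex_of_real s ^ (m+2) * z ^ (m+2))"
      unfolding F by (simp add: algebra_simps)
    also have "\<dots> = complex_of_real s ^ (m+1) * Fint g r a b (t+1) (m+1) z"
      unfolding key F by (simp add: algebra_simps)
    finally show "complex_of_real q * complex_of_real s ^ m * Fint g r a b t m z
       + complex_of_real r * complex_of_real s ^ (m+1) * Fint g r a b t (m+1) z
       + complex_of_real p * complex_of_real s ^ (m+2) * Fint g r a b t (m+2) z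
       = complex_of_real s ^ (m+1) * Fint g r a b (t+1) (m+1) z" .
  qed
  moreover have "((\<lambda>z. complex_of_real s ^ (m+1) * Fint g r a b (t+1) (m+1) z) has_contour_integral
       (complex_of_real s ^ (m+1) * contour_integral (circlepath 0 1) (Fint g r a b (t+1) (m+1)))) (circlepath 0 1)"
    by (intro has_contour_integral_lmul Fint_has ab)
  ultimately show ?thesis by (metis has_contour_integral_unique)
qed

lemma Fint_bound:
  assumes ab: "\<bar>a\<bar> < 1" "\<bar>b\<bar> < 1" and g: "g \<ge> 0" and r: "r \<ge> 0"
  shows "norm (contour_integral (circlepath 0 1) (Fint g r a b t n))
           \<le> 2 * (r + 2 * g) ^ t / ((1 - \<bar>a\<bar>) * (1 - \<bar>b\<bar>)) * (2 * pi * 1)"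
proof (rule has_contour_integral_bound_circlepath[OF Fint_has[OF ab]])
  show "0 \<le> 2 * (r + 2 * g) ^ t / ((1 - \<bar>a\<bar>) * (1 - \<bar>b\<bar>))"
    using ab g r by simp
  fix z :: complex assume "norm (z - 0) = 1"
  then have z: "norm z = 1" by simp
  then have z0: "z \<noteq> 0" by auto
  have nA: "norm (complex_of_real g * (z + inverse z) + complex_of_real r) \<le> r + 2 * g"
  proof -
    have "norm (complex_of_real g * (z + inverse z) + complex_of_real r)
        \<le> norm (complex_of_real g * (z + inverse z)) + norm (complex_of_real r)" by (rule norm_triangle_ineq)
    also have "norm (complex_of_real g * (z + inverse z)) \<le> g * (norm z + norm (inverse z))"
      using g by (simp add: norm_mult norm_triangle_ineq mult_left_mono)
    finally show ?thesis using z r by (simp add: norm_inverse)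
  qed
  have nW: "norm (z - inverse z) \<le> 2"
    using norm_triangle_ineq4[of z "inverse z"] z by (simp add: norm_inverse)
  have na: "1 - \<bar>a\<bar> \<le> norm (z - complex_of_real a)"
    using norm_triangle_ineq2[of z "complex_of_real a"] z by simp
  have nb: "1 - \<bar>b\<bar> \<le> norm (z - complex_of_real b)"
    using norm_triangle_ineq2[of z "complex_of_real b"] z by simp
  have "norm (Fint g r a b t n z) =
     norm (complex_of_real g * (z + inverse z) + complex_of_real r) ^ t * norm (z - inverse z)
       / (norm (z - complex_of_real a) * norm (z - complex_of_real b))"
    by (simp add: Fint_def norm_mult norm_divide norm_power z)
  also have "\<dots> \<le> (r + 2 * g) ^ t * 2 / ((1 - \<bar>a\<bar>) * (1 - \<bar>b\<bar>))"
  proof (rule frac_le)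
    show "0 \<le> (r + 2 * g) ^ t * 2" using r g by simp
    show "norm (complex_of_real g * (z + inverse z) + complex_of_real r) ^ t * norm (z - inverse z) \<le> (r + 2 * g) ^ t * 2"
      by (rule mult_mono[OF power_mono[OF nA] nW]) (use r g in auto)
    show "0 < (1 - \<bar>a\<bar>) * (1 - \<bar>b\<bar>)" using ab by simp
    show "(1 - \<bar>a\<bar>) * (1 - \<bar>b\<bar>) \<le> norm (z - complex_of_real a) * norm (z - complex_of_real b)"
      by (rule mult_mono[OF na nb]) (use ab in auto)
  qed
  finally show "norm (Fint g r a b t n z) \<le> 2 * (r + 2 * g) ^ t / ((1 - \<bar>a\<bar>) * (1 - \<bar>b\<bar>))"
    by (simp add: mult.commute)
qed simp


lemma cancelP: "(P::complex) \<noteq> 0 \<Longrightarrow> Y * (U / P) * (c * P / x) = c * Y * (U / x)"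
  by (simp add: field_simps)

lemma Fint_boundary:
  assumes ab: "\<bar>a\<bar> < 1" "\<bar>b\<bar> < 1" and h1: "(g - s) * (a + b) = - r" and h2: "(g - s) * a * b = g"
    and g: "g \<noteq> 0"
  shows "contour_integral (circlepath 0 1) (Fint g r a b (t+1) 0) =
         complex_of_real s * contour_integral (circlepath 0 1) (Fint g r a b t 1)"
proof -
  define A where "A = (\<lambda>z. complex_of_real g * (z + inverse z) + complex_of_real r)"
  define c where "c = complex_of_real ((g - s) / (g * (real t + 1)))"
  define D where "D = (\<lambda>x. complex_of_real (g - s) * A x ^ t * (1 - inverse x ^ 2))"
  have deriv: "((\<lambda>z. c * A z ^ (t+1)) has_field_derivative D x) (at x within sphere 0 1)"
    if x: "x \<in> sphere 0 1" for x
  proof -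
    from x have x0: "x \<noteq> 0" by auto
    have dinv: "((\<lambda>z. inverse z) has_field_derivative - (inverse x ^ 2)) (at x)"
      using DERIV_inverse[OF x0] by (simp add: numeral_2_eq_2)
    have "((\<lambda>z. z + inverse z) has_field_derivative 1 + - (inverse x ^ 2)) (at x)"
      by (rule DERIV_add[OF DERIV_ident dinv])
    from DERIV_add[OF DERIV_cmult[OF this, of "complex_of_real g"] DERIV_const[of "complex_of_real r"]]
    have dA: "(A has_field_derivative complex_of_real g * (1 - inverse x ^ 2)) (at x)"
      unfolding A_def by simp
    have "((\<lambda>z. c * A z ^ (t+1)) has_field_derivative
          c * (of_nat (t+1) * (complex_of_real g * (1 - inverse x ^ 2) * A x ^ t))) (at x)"
      using DERIV_cmult[OF DERIV_power[OF dA, of "t+1"], of c] by simp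
    moreover have "c * (of_nat (t+1) * (complex_of_real g * (1 - inverse x ^ 2) * A x ^ t)) = D x"
    proof -
      have nz: "g * (real t + 1) \<noteq> 0" using g by (simp add: add_nonneg_eq_0_iff)
      have e0: "(g - s) / (g * (real t + 1)) * (g * (real t + 1)) = g - s" using nz by simp
      have e: "(g - s) / (g * (real t + 1)) * ((real t + 1) * g) = g - s" using e0 by (simp only: mult.commute)
      have e2: "complex_of_real ((g - s) / (g * (real t + 1))) * (complex_of_real (real t + 1) * complex_of_real g) = complex_of_real (g - s)"
        by (simp only: of_real_mult[symmetric] e)
      have e3: "(of_nat (t+1) :: complex) = complex_of_real (real t + 1)" by simp
      have "c * (of_nat (t+1) * (complex_of_real g * (1 - inverse x ^ 2) * A x ^ t))
          = (c * (of_nat (t+1) * complex_of_real g)) * A x ^ t * (1 - inverse x ^ 2)" by (simp only: mult_ac)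
      also have "\<dots> = complex_of_real (g - s) * A x ^ t * (1 - inverse x ^ 2)"
        by (simp only: e3 c_def e2)
      finally show ?thesis unfolding D_def .
    qed
    ultimately show ?thesis by (simp add: has_field_derivative_at_within)
  qed
  have eqD: "D x = Fint g r a b (t+1) 0 x - complex_of_real s * Fint g r a b t 1 x"
    if x: "x \<in> path_image (circlepath 0 1)" for x
  proof -
    from x have xn: "norm x = 1" by simp
    then have x0: "x \<noteq> 0" by auto
    have xa: "x - complex_of_real a \<noteq> 0" "x - complex_of_real b \<noteq> 0" using xn ab by auto
    have h1': "complex_of_real (g - s) * (complex_of_real a + complex_of_real b) = - complex_of_real r"
      using arg_cong[OF h1, of complex_of_real] by simp
    have h2': "complex_of_real (g - s) * complex_of_real a * complex_of_real b = complex_of_real g"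
      using arg_cong[OF h2, of complex_of_real] by simp
    have L: "(A x - complex_of_real s * x) * x = complex_of_real (g - s) * x ^ 2 + complex_of_real r * x + complex_of_real g"
      using x0 by (simp add: A_def algebra_simps power2_eq_square)
    have R: "complex_of_real (g - s) * ((x - complex_of_real a) * (x - complex_of_real b))
        = complex_of_real (g - s) * x ^ 2 - x * (complex_of_real (g - s) * (complex_of_real a + complex_of_real b))
          + complex_of_real (g - s) * complex_of_real a * complex_of_real b"
      by (simp add: algebra_simps power2_eq_square)
    have e1: "A x - complex_of_real s * x = complex_of_real (g - s) * ((x - complex_of_real a) * (x - complex_of_real b)) / x"
      using L x0 unfolding R h1' h2' by (simp add: field_simps)
    define W where "W = (x - inverse x) / ((x - complex_of_real a) * (x - complex_of_real b))"
    have F: "Fint g r a b t' n x = A x ^ t' * x ^ n * W" for t' n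
      by (simp add: Fint_def A_def W_def)
    have "Fint g r a b (t+1) 0 x - complex_of_real s * Fint g r a b t 1 x
        = A x ^ t * ((x - inverse x) / ((x - complex_of_real a) * (x - complex_of_real b))) * (A x - complex_of_real s * x)"
      unfolding F W_def[symmetric] by (simp add: algebra_simps)
    also have "\<dots> = complex_of_real (g - s) * A x ^ t * ((x - inverse x) / x)"
      unfolding e1 by (rule cancelP) (use xa in simp)
    also have "\<dots> = D x"
      using x0 by (simp add: D_def field_simps power2_eq_square)
    finally show ?thesis by simp
  qed
  have "(D has_contour_integral 0) (circlepath 0 1)"
    by (rule Cauchy_theorem_primitive[of "sphere 0 1"]) (use deriv in auto)
  then have "((\<lambda>x. Fint g r a b (t+1) 0 x - complex_of_real s * Fint g r a b t 1 x) has_contour_integral 0) (circlepath 0 1)"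
    by (rule has_contour_integral_eq) (rule eqD)
  note h0 = this
  have h1: "((\<lambda>x. Fint g r a b (t+1) 0 x - complex_of_real s * Fint g r a b t 1 x) has_contour_integral
      (contour_integral (circlepath 0 1) (Fint g r a b (t+1) 0) - complex_of_real s * contour_integral (circlepath 0 1) (Fint g r a b t 1)))
      (circlepath 0 1)"
    by (intro has_contour_integral_diff has_contour_integral_lmul Fint_has ab)
  have "contour_integral (circlepath 0 1) (Fint g r a b (t+1) 0) - complex_of_real s * contour_integral (circlepath 0 1) (Fint g r a b t 1) = 0"
    by (rule has_contour_integral_unique[OF h1 h0])
  then show ?thesis by simp
qed


context
  fixes p q r :: real
  assumes pos: "p > 0" "q > 0" "r > 0" and sum1: "p + q + r = 1" and qp: "q > p"
begin

lemma sq_facts: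
  obtains sp sq where "sp > 0" "sq > 0" "p = sp^2" "q = sq^2" "sp < sq"
    "sqrt (p*q) = sp * sq" "sqrt (p/q) = sp/sq" "sqrt (q/p) = sq/sp"
proof
  show "sqrt p > 0" "sqrt q > 0" using pos by auto
  show "p = (sqrt p)^2" "q = (sqrt q)^2" using pos by auto
  show "sqrt p < sqrt q" using qp by simp
  show "sqrt (p*q) = sqrt p * sqrt q" by (simp add: real_sqrt_mult)
  show "sqrt (p/q) = sqrt p / sqrt q" by (simp add: real_sqrt_divide)
  show "sqrt (q/p) = sqrt q / sqrt p" by (simp add: real_sqrt_divide)
qed

lemma ap_eq: "sqrt (p / q) * (r + (1 + q - p)) / (2 * (q + r)) = sqrt (p/q)"
proof -
  have e: "r + (1 + q - p) = 2 * (q + r)" using sum1 by simp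
  have "q + r > 0" using pos by simp
  then show ?thesis unfolding e by simp
qed

lemma am_eq: "sqrt (p / q) * (r - (1 + q - p)) / (2 * (q + r)) = - sqrt (p/q) * q / (q + r)"
proof -
  have e: "r - (1 + q - p) = - 2 * q" using sum1 by simp
  have "q + r > 0" using pos by simp
  then show ?thesis unfolding e by (simp add: field_simps)
qed

lemma numfacts:
  defines "g \<equiv> sqrt (p*q)" and "s \<equiv> sqrt (q/p)" and "a \<equiv> sqrt (p/q)" and "b \<equiv> - sqrt (p/q) * q / (q + r)"
    and "l \<equiv> - q / (q + r)" and "c \<equiv> ((1 + q - p) * (q + r) - q) / ((1 + q - p) * (q + r))"
    and "K \<equiv> p / (q + r)" and "ir \<equiv> (q - p) / (1 + q - p)"
  shows "q = g * s" "p * s = g" "(g - s) * (a + b) = - r" "(g - s) * a * b = g" "g > 0" "s > 0"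
    "0 < a" "a < 1" "-1 < b" "b < 0" "s * a = 1" "s * b = l"
    "ir + c + K = 1" "ir + K * (a - s) / (a - b) = 0" "c * l + K * (s - b * l) / (a - b) = 0"
    "q + r * l + p * l^2 = l^2"
proof -
  obtain sp sq where f: "sp > 0" "sq > 0" "p = sp^2" "q = sq^2" "sp < sq"
    "sqrt (p*q) = sp * sq" "sqrt (p/q) = sp/sq" "sqrt (q/p) = sq/sp" by (rule sq_facts)
  obtain D where D: "D = q + r" by blast
  obtain E where E: "E = 1 + q - p" by blast
  have Dp: "D > 0" using D pos by simp
  have Ep: "E > 0" using E qp by simp
  have D1: "D = 1 - sp^2" using D sum1 f by simp
  have E1: "E = 1 + sq^2 - sp^2" using E f by simp
  have r1: "r = D - sq^2" using D f by simp
  have gd: "g = sp * sq" "s = sq / sp" "a = sp / sq" "b = - (sp / sq) * (sq^2 / D)"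
    "l = - (sq^2 / D)" "c = (E * D - sq^2) / (E * D)" "K = sp^2 / D" "ir = (sq^2 - sp^2) / E"
    unfolding g_def s_def a_def b_def l_def c_def K_def ir_def using f D E by simp_all
  have nz: "sp \<noteq> 0" "sq \<noteq> 0" "D \<noteq> 0" "E \<noteq> 0" using f Dp Ep by auto
  show "q = g * s" unfolding gd using f by (simp add: power2_eq_square)
  show "p * s = g" unfolding gd using f by (simp add: power2_eq_square)
  show "g > 0" "s > 0" "0 < a" unfolding gd using f by simp_all
  show "a < 1" unfolding gd using f by simp
  show "s * a = 1" unfolding gd using f by simp
  have X1: "sq^2 / D < 1" using Dp r1 pos(3) by (simp add: divide_less_eq_1_pos)
  show "b < 0" unfolding gd using f Dp by (simp add: divide_pos_pos)
  show "s * b = l" unfolding gd using nz by (simp add: field_simps)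
  show "-1 < b"
  proof -
    have "sp/sq * (sq^2 / D) < 1 * 1"
      by (rule mult_strict_mono') (use f(1,2,5) X1 Dp in \<open>auto\<close>)
    then show ?thesis unfolding gd by simp
  qed
  show "(g - s) * (a + b) = - r" unfolding gd r1 using nz
    by (simp add: field_simps) (simp add: D1 algebra_simps power2_eq_square)
  show "(g - s) * a * b = g" unfolding gd using nz
    by (simp add: field_simps) (simp add: D1 algebra_simps power2_eq_square)
  show "ir + c + K = 1" unfolding gd using nz
    by (simp add: field_simps) (simp add: D1 E1 algebra_simps power2_eq_square)
  show "ir + K * (a - s) / (a - b) = 0"
  proof -
    have amb: "a - b = sp * E / (sq * D)" unfolding gd using nz
      by (simp add: field_simps) (simp add: D1 E1 algebra_simps power2_eq_square)
    show ?thesis unfolding amb unfolding gd using nz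
      by (simp add: field_simps) (simp add: D1 E1 algebra_simps power2_eq_square)
  qed
  show "c * l + K * (s - b * l) / (a - b) = 0"
  proof -
    have amb: "a - b = sp * E / (sq * D)" unfolding gd using nz
      by (simp add: field_simps) (simp add: D1 E1 algebra_simps power2_eq_square)
    show ?thesis unfolding amb unfolding gd using nz
      by (simp add: field_simps) (simp only: D1 E1, algebra)
  qed
  show "q + r * l + p * l^2 = l^2" unfolding gd r1 f(3,4) using nz
    by (simp add: field_simps) (simp only: D1, algebra)
qed

end

context
  fixes p q r :: real
  assumes pos: "p > 0" "q > 0" "r > 0" and sum1: "p + q + r = 1" and qp: "q > p"
begin

lemma main_id:
  defines "g \<equiv> sqrt (p*q)" and "s \<equiv> sqrt (q/p)" and "a \<equiv> sqrt (p/q)" and "b \<equiv> - sqrt (p/q) * q / (q + r)"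
    and "l \<equiv> - q / (q + r)" and "c \<equiv> ((1 + q - p) * (q + r) - q) / ((1 + q - p) * (q + r))"
    and "K \<equiv> p / (q + r)" and "ir \<equiv> (q - p) / (1 + q - p)"
  shows "complex_of_real (bdPt p q r t n 0) =
     complex_of_real (ir + c * l ^ (t + n))
     + complex_of_real (s ^ n * K) * (1 / (2 * pi * \<i>)) * contour_integral (circlepath 0 1) (Fint g r a b t n)"
proof -
  note nf = numfacts[OF pos sum1 qp, folded g_def s_def a_def b_def l_def c_def K_def ir_def]
  have ab: "\<bar>a\<bar> < 1" "\<bar>b\<bar> < 1" "a \<noteq> b" "a \<noteq> 0" "b \<noteq> 0" using nf by auto
  define Z :: complex where "Z = 1 / (2 * pi * \<i>)"
  have Z: "Z * (2 * of_real pi * \<i>) = 1" unfolding Z_def by simp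
  let ?J = "\<lambda>t n. contour_integral (circlepath 0 1) (Fint g r a b t n)"
  show ?thesis unfolding Z_def[symmetric]
  proof (induction t arbitrary: n)
    case 0
    have J0: "?J 0 n = 2 * of_real pi * \<i> * complex_of_real
       ((a ^ (n+1) - b ^ (n+1) - (if n = 0 then 0 else a ^ (n-1) - b ^ (n-1))) / (a - b))"
      by (rule Fint_t0) (use ab in auto)
    have real: "bdPt p q r 0 n 0 = ir + c * l ^ n + s ^ n * K *
        ((a ^ (n+1) - b ^ (n+1) - (if n = 0 then 0 else a ^ (n-1) - b ^ (n-1))) / (a - b))"
    proof (cases n)
      case 0
      then show ?thesis using nf ab by simp
    next
      case (Suc m)
      have sa: "s * a = 1" "s * b = l" using nf by auto
      have p1: "s^(m+1) * a^(m+2) = a"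
      proof -
        have "s^(m+1) * a^(m+2) = (s * a)^(m+1) * a" by (simp add: power_mult_distrib mult_ac)
        then show ?thesis using sa by simp
      qed
      have p2: "s^(m+1) * b^(m+2) = l^(m+1) * b"
      proof -
        have "s^(m+1) * b^(m+2) = (s * b)^(m+1) * b" by (simp add: power_mult_distrib mult_ac)
        then show ?thesis using sa by simp
      qed
      have p3: "s^(m+1) * a^m = s"
      proof -
        have "s^(m+1) * a^m = (s * a)^m * s" by (simp add: power_mult_distrib mult_ac)
        then show ?thesis using sa by simp
      qed
      have p4: "s^(m+1) * b^m = l^m * s"
      proof -
        have "s^(m+1) * b^m = (s * b)^m * s" by (simp add: power_mult_distrib mult_ac)
        then show ?thesis using sa by simp
      qed
      have "s ^ n * K * ((a ^ (n+1) - b ^ (n+1) - (if n = 0 then 0 else a ^ (n-1) - b ^ (n-1))) / (a - b))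
          = K * ((s^(m+1) * a^(m+2) - s^(m+1) * b^(m+2) - (s^(m+1) * a^m - s^(m+1) * b^m)) / (a - b))"
        by (simp add: Suc algebra_simps)
      also have "\<dots> = K * (a - s) / (a - b) + l^m * (K * (s - b * l) / (a - b))"
        unfolding p1 p2 p3 p4 by (simp add: algebra_simps diff_divide_distrib add_divide_distrib)
      finally have e: "s ^ n * K * ((a ^ (n+1) - b ^ (n+1) - (if n = 0 then 0 else a ^ (n-1) - b ^ (n-1))) / (a - b))
          = K * (a - s) / (a - b) + l^m * (K * (s - b * l) / (a - b))" .
      have "ir + c * l ^ n + (K * (a - s) / (a - b) + l^m * (K * (s - b * l) / (a - b)))
          = (ir + K * (a - s) / (a - b)) + l^m * (c * l + K * (s - b * l) / (a - b))"
        by (simp add: Suc algebra_simps)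
      also have "\<dots> = 0" using nf by simp
      finally show ?thesis unfolding e using Suc by simp
    qed
    define W where "W = (a ^ (n+1) - b ^ (n+1) - (if n = 0 then 0 else a ^ (n-1) - b ^ (n-1))) / (a - b)"
    have "complex_of_real (s^n*K) * Z * (2 * of_real pi * \<i> * complex_of_real W)
        = complex_of_real (s^n*K) * (Z * (2 * of_real pi * \<i>)) * complex_of_real W" by (simp only: mult_ac)
    also have "\<dots> = complex_of_real (s^n*K*W)" unfolding Z by simp
    finally have zz: "complex_of_real (s^n*K) * Z * (2 * of_real pi * \<i> * complex_of_real W) = complex_of_real (s^n*K*W)" .
    show ?case unfolding J0 real W_def[symmetric] zz by simp
  next
    case (Suc t)
    show ?case
    proof (cases n)
      case 0
      have G: "bdPt p q r (Suc t) 0 0 = bdPt p q r t 1 0"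
        using sum_bdP[of p q r 0 "\<lambda>k. bdPt p q r t k 0"] by simp
      have B: "?J (t+1) 0 = complex_of_real s * ?J t 1"
        by (rule Fint_boundary) (use ab nf in auto)
      show ?thesis unfolding G 0 using Suc.IH[of 1] B by (simp add: algebra_simps)
    next
      case (Suc m)
      have G: "bdPt p q r (Suc t) n 0 = q * bdPt p q r t m 0 + r * bdPt p q r t (m+1) 0 + p * bdPt p q r t (m+2) 0"
        using sum_bdP[of p q r n "\<lambda>k. bdPt p q r t k 0"] Suc by simp
      have R: "q * (ir + c * l ^ (t + m)) + r * (ir + c * l ^ (t + (m+1))) + p * (ir + c * l ^ (t + (m+2)))
          = ir + c * l ^ (Suc t + n)"
      proof -
        have "q * (ir + c * l ^ (t + m)) + r * (ir + c * l ^ (t + (m+1))) + p * (ir + c * l ^ (t + (m+2)))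
            = (p + q + r) * ir + c * l ^ (t + m) * (q + r * l + p * l^2)"
          by (simp add: algebra_simps power_add power2_eq_square)
        also have "\<dots> = ir + c * l ^ (Suc t + n)"
          using nf sum1 Suc by (simp add: power_add power2_eq_square algebra_simps)
        finally show ?thesis .
      qed
      have FR: "complex_of_real q * complex_of_real s ^ m * ?J t m
       + complex_of_real r * complex_of_real s ^ (m+1) * ?J t (m+1)
       + complex_of_real p * complex_of_real s ^ (m+2) * ?J t (m+2)
       = complex_of_real s ^ (m+1) * ?J (t+1) (m+1)"
        by (rule Fint_rec) (use ab nf in auto)
      have "complex_of_real (bdPt p q r (Suc t) n 0)
         = complex_of_real (q * (ir + c * l ^ (t + m)) + r * (ir + c * l ^ (t + (m+1))) + p * (ir + c * l ^ (t + (m+2))))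
           + complex_of_real K * Z * (complex_of_real q * complex_of_real s ^ m * ?J t m
       + complex_of_real r * complex_of_real s ^ (m+1) * ?J t (m+1)
       + complex_of_real p * complex_of_real s ^ (m+2) * ?J t (m+2))"
        unfolding G using Suc.IH[of m] Suc.IH[of "m+1"] Suc.IH[of "m+2"]
        by (simp add: algebra_simps)
      also have "\<dots> = complex_of_real (ir + c * l ^ (Suc t + n)) + complex_of_real K * Z * (complex_of_real s ^ (m+1) * ?J (t+1) (m+1))"
        unfolding R FR ..
      finally show ?thesis using Suc by (simp add: algebra_simps)
    qed
  qed
qed

end

lemma Qpoly_cont: "continuous_on UNIV (Qpoly p q r n)"
proof (induction n rule: nat_less_induct)
  case (1 n)
  show ?case
  proof (cases n)
    case 0 then show ?thesis by (simp add: continuous_on_const)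
  next
    case (Suc m)
    show ?thesis
    proof (cases m)
      case 0 then show ?thesis using Suc by (simp add: continuous_on_id)
    next
      case (Suc k)
      have "continuous_on UNIV (Qpoly p q r k)" "continuous_on UNIV (Qpoly p q r (Suc k))"
        using 1 \<open>n = Suc m\<close> Suc by auto
      then have "continuous_on UNIV (\<lambda>x. (x * Qpoly p q r (Suc k) x - q * Qpoly p q r k x - r * Qpoly p q r (Suc k) x) * inverse p)"
        by (intro continuous_intros) auto
      then show ?thesis using \<open>n = Suc m\<close> Suc by (simp add: divide_inverse)
    qed
  qed
qed

lemma Qpoly_one: "p \<noteq> 0 \<Longrightarrow> p + q + r = 1 \<Longrightarrow> Qpoly p q r n 1 = 1"
proof (induction n rule: nat_less_induct)
  case (1 n)
  show ?case
  proof (cases n)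
    case 0 then show ?thesis by simp
  next
    case (Suc m)
    show ?thesis
    proof (cases m)
      case 0 then show ?thesis using Suc by simp
    next
      case (Suc k)
      have "Qpoly p q r k 1 = 1" "Qpoly p q r (Suc k) 1 = 1" using 1 \<open>n = Suc m\<close> Suc by auto
      then show ?thesis using \<open>n = Suc m\<close> Suc 1(2,3) by (simp add: field_simps)
    qed
  qed
qed

lemma Q_rec: "p \<noteq> 0 \<Longrightarrow> (\<Sum>k\<le>i+1. bdP p q r i k * Qpoly p q r k x) = x * Qpoly p q r i x"
proof (cases i)
  case 0 then show ?thesis by (simp add: bdP_def)
next
  case (Suc m)
  assume p: "p \<noteq> 0"
  show ?thesis unfolding sum_bdP[of p q r i "\<lambda>k. Qpoly p q r k x"] using Suc p
    by (simp add: field_simps)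
qed

context
  fixes p q r :: real and \<psi> :: "real measure"
  assumes sm: "is_spectral_measure p q r \<psi>" and p0: "p \<noteq> 0"
begin

lemma sm_prob: "prob_space \<psi>" and sm_sets: "sets \<psi> = sets borel" and sm_space: "space \<psi> = UNIV"
  using sm unfolding is_spectral_measure_def by (auto dest: sets_eq_imp_space_eq)

lemma sm_AE: "AE x in \<psi>. x \<in> {-1..1}"
proof (rule AE_I')
  show "- {-1..1} \<in> null_sets \<psi>"
    using sm unfolding is_spectral_measure_def by (auto intro!: null_setsI)
  show "{x \<in> space \<psi>. x \<notin> {- 1..1}} \<subseteq> - {- 1..1}" by auto
qed

lemma sm_meas: "continuous_on UNIV f \<Longrightarrow> (f :: real \<Rightarrow> real) \<in> borel_measurable \<psi>"
  using borel_measurable_continuous_onI measurable_cong_sets[OF sm_sets refl] by blast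

lemma sm_integrable:
  assumes f: "continuous_on UNIV (f :: real \<Rightarrow> real)"
  shows "integrable \<psi> f"
proof -
  interpret prob_space \<psi> by (rule sm_prob)
  have "compact (f ` {-1..1})" by (rule compact_continuous_image) (use f continuous_on_subset in blast, simp)
  then have "bounded (f ` {-1..1})" by (rule compact_imp_bounded)
  then obtain B where B: "\<forall>y\<in>f ` {-1..1}. norm y \<le> B" unfolding bounded_iff by blast
  have "AE x in \<psi>. norm (f x) \<le> B" using sm_AE by eventually_elim (use B in auto)
  then show ?thesis by (rule integrable_const_bound) (rule sm_meas[OF f])
qed

lemma KM: "bdPt p q r t i 0 = (\<integral>x. x ^ t * Qpoly p q r i x \<partial>\<psi>)"
proof (induction t arbitrary: i)
  case 0
  have "(\<integral>x. Qpoly p q r i x * Qpoly p q r 0 x \<partial>\<psi>) = (if i = 0 then 1 / piw p q 0 else 0)"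
    using sm unfolding is_spectral_measure_def by blast
  then show ?case by (simp add: piw_def)
next
  case (Suc t)
  have int: "integrable \<psi> (\<lambda>x. bdP p q r i k * (x ^ t * Qpoly p q r k x))" for k
    by (intro sm_integrable continuous_intros Qpoly_cont[THEN continuous_on_subset]) auto
  have int2: "integrable \<psi> (\<lambda>x. x ^ t * Qpoly p q r k x)" for k
    by (intro sm_integrable continuous_intros Qpoly_cont[THEN continuous_on_subset]) auto
  have "bdPt p q r (Suc t) i 0 = (\<Sum>k\<le>i+1. bdP p q r i k * (\<integral>x. x ^ t * Qpoly p q r k x \<partial>\<psi>))"
    by (simp add: Suc.IH)
  also have "\<dots> = (\<Sum>k\<le>i+1. (\<integral>x. bdP p q r i k * (x ^ t * Qpoly p q r k x) \<partial>\<psi>))"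
    by simp
  also have "\<dots> = (\<integral>x. (\<Sum>k\<le>i+1. bdP p q r i k * (x ^ t * Qpoly p q r k x)) \<partial>\<psi>)"
    by (subst Bochner_Integration.integral_sum) (auto simp: int2)
  also have "\<dots> = (\<integral>x. x ^ Suc t * Qpoly p q r i x \<partial>\<psi>)"
  proof (rule Bochner_Integration.integral_cong[OF refl])
    fix x
    have "(\<Sum>k\<le>i+1. bdP p q r i k * (x ^ t * Qpoly p q r k x)) = x ^ t * (\<Sum>k\<le>i+1. bdP p q r i k * Qpoly p q r k x)"
      by (subst sum_distrib_left) (rule sum.cong[OF refl], simp only: mult_ac)
    also have "\<dots> = x ^ Suc t * Qpoly p q r i x" using Q_rec[OF p0] by simp
    finally show "(\<Sum>k\<le>i+1. bdP p q r i k * (x ^ t * Qpoly p q r k x)) = x ^ Suc t * Qpoly p q r i x" .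
  qed
  finally show ?case .
qed

lemma split_int:
  assumes f: "continuous_on UNIV (f :: real \<Rightarrow> real)"
  shows "(\<integral>x. f x \<partial>\<psi>) = (LINT x:{-1<..<1}|\<psi>. f x) + f 1 * measure \<psi> {1} + f (-1) * measure \<psi> {-1}"
proof -
  have sI: "{-1<..<1::real} \<in> sets \<psi>" "{1::real} \<in> sets \<psi>" "{-1::real} \<in> sets \<psi>" using sm_sets by auto
  have i1: "integrable \<psi> (\<lambda>x. indicator {-1<..<1} x *\<^sub>R f x)"
    by (rule integrable_mult_indicator[OF sI(1) sm_integrable[OF f]])
  have i2: "integrable \<psi> (\<lambda>x. f 1 * indicator {1} x)"
    using integrable_mult_indicator[OF sI(2) sm_integrable[OF continuous_on_const[of UNIV "f 1"]]] by (simp add: mult.commute)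
  have i3: "integrable \<psi> (\<lambda>x. f (-1) * indicator {-1} x)"
    using integrable_mult_indicator[OF sI(3) sm_integrable[OF continuous_on_const[of UNIV "f (-1)"]]] by (simp add: mult.commute)
  have "(\<integral>x. f x \<partial>\<psi>) = (\<integral>x. indicator {-1<..<1} x *\<^sub>R f x + f 1 * indicator {1} x + f (-1) * indicator {-1} x \<partial>\<psi>)"
  proof (rule integral_cong_AE)
    show "f \<in> borel_measurable \<psi>" by (rule sm_meas[OF f])
    show "(\<lambda>x. indicator {-1<..<1} x *\<^sub>R f x + f 1 * indicator {1} x + f (-1) * indicator {-1} x) \<in> borel_measurable \<psi>"
      using i1 i2 i3 by auto
    show "AE x in \<psi>. f x = indicator {-1<..<1} x *\<^sub>R f x + f 1 * indicator {1} x + f (-1) * indicator {-1} x"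
      using sm_AE by eventually_elim (auto simp: indicator_def)
  qed
  also have "\<dots> = (\<integral>x. indicator {-1<..<1} x *\<^sub>R f x \<partial>\<psi>) + (\<integral>x. f 1 * indicator {1} x \<partial>\<psi>) + (\<integral>x. f (-1) * indicator {-1} x \<partial>\<psi>)"
    using i1 i2 i3 by simp
  also have "\<dots> = (LINT x:{-1<..<1}|\<psi>. f x) + f 1 * measure \<psi> {1} + f (-1) * measure \<psi> {-1}"
    by (simp add: set_lebesgue_integral_def sm_space)
  finally show ?thesis .
qed

lemma lim_open: "(\<lambda>t. LINT x:{-1<..<1}|\<psi>. x ^ t) \<longlonglongrightarrow> 0"
proof -
  interpret prob_space \<psi> by (rule sm_prob)
  have "(\<lambda>t. \<integral>x. indicator {-1<..<1} x *\<^sub>R x ^ t \<partial>\<psi>) \<longlonglongrightarrow> (\<integral>x. 0 \<partial>\<psi>)"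
  proof (rule integral_dominated_convergence[where w = "\<lambda>x. 1"])
    show "(\<lambda>x. 0::real) \<in> borel_measurable \<psi>" by simp
    show "(\<lambda>x. indicator {-1<..<1} x *\<^sub>R x ^ t) \<in> borel_measurable \<psi>" for t :: nat
    proof -
      have m: "(\<lambda>x::real. indicator {-1<..<1} x *\<^sub>R x ^ t) \<in> borel_measurable borel" by measurable
      show ?thesis by (subst measurable_cong_sets[OF sm_sets refl]) (rule m)
    qed
    show "integrable \<psi> (\<lambda>x. 1::real)" by simp
    show "AE x in \<psi>. (\<lambda>t. indicator {-1<..<1} x *\<^sub>R x ^ t) \<longlonglongrightarrow> 0"
    proof (rule AE_I2)
      fix x :: real
      show "(\<lambda>t. indicator {-1<..<1} x *\<^sub>R x ^ t) \<longlonglongrightarrow> 0"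
      proof (cases "x \<in> {-1<..<1}")
        case True
        then have "\<bar>x\<bar> < 1" by auto
        then show ?thesis using True by (simp add: LIMSEQ_abs_realpow_zero2)
      qed simp
    qed
    show "AE x in \<psi>. norm (indicator {-1<..<1} x *\<^sub>R x ^ t) \<le> 1" for t :: nat
    proof (rule AE_I2)
      fix x :: real
      show "norm (indicator {-1<..<1} x *\<^sub>R x ^ t) \<le> 1"
        by (cases "x \<in> {-1<..<1}") (auto simp: power_abs intro!: power_le_one)
    qed
  qed
  then show ?thesis by (simp add: set_lebesgue_integral_def)
qed

end

lemma piw_sums:
  assumes "p > 0" "q > 0" "y \<ge> 0" "p * y < q"
  shows "(\<lambda>x. piw p q x * y ^ x) sums (1 + y / (q - p * y))"
proof -
  have g: "(\<lambda>n. (y / q) * (p * y / q) ^ n) sums ((y / q) * (1 / (1 - p * y / q)))"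
    by (rule sums_mult, rule geometric_sums) (use assms in \<open>auto simp: divide_simps\<close>)
  have e: "piw p q (Suc n) * y ^ Suc n = (y / q) * (p * y / q) ^ n" for n
    using assms by (simp add: piw_def power_mult_distrib power_divide field_simps)
  have v: "(y / q) * (1 / (1 - p * y / q)) = y / (q - p * y)"
    using assms by (simp add: field_simps)
  have "(\<lambda>n. piw p q (Suc n) * y ^ Suc n) sums (y / (q - p * y))"
    using g unfolding e v .
  then have "(\<lambda>x. piw p q x * y ^ x) sums (y / (q - p * y) + piw p q 0 * y ^ 0)"
    by (rule sums_Suc)
  then show ?thesis by (simp add: piw_def add.commute)
qed

context
  fixes p q r :: real
  assumes pos: "p > 0" "q > 0" "r > 0" and sum1: "p + q + r = 1" and qp: "q > p"
begin

lemma rho_eq: "rho p q = (1 + q - p) / (q - p)"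
proof -
  have "(\<lambda>x. piw p q x * 1 ^ x) sums (1 + 1 / (q - p * 1))"
    by (rule piw_sums) (use pos qp in auto)
  then have "rho p q = 1 + 1 / (q - p)" unfolding rho_def by (simp add: sums_iff)
  then show ?thesis using qp by (simp add: field_simps)
qed

lemma Hbound:
  defines "g \<equiv> sqrt (p*q)" and "s \<equiv> sqrt (q/p)" and "a \<equiv> sqrt (p/q)" and "b \<equiv> - sqrt (p/q) * q / (q + r)"
    and "l \<equiv> - q / (q + r)" and "c \<equiv> ((1 + q - p) * (q + r) - q) / ((1 + q - p) * (q + r))"
    and "K \<equiv> p / (q + r)" and "ir \<equiv> (q - p) / (1 + q - p)"
  shows "\<bar>bdPt p q r t n 0 - ir - c * l ^ (t + n)\<bar> \<le> s ^ n * K * (2 * (r + 2 * g) ^ t / ((1 - a) * (1 + b)))"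
proof -
  note nf = numfacts[OF pos sum1 qp, folded g_def s_def a_def b_def l_def c_def K_def ir_def]
  note mi = main_id[OF pos sum1 qp, of t n, folded g_def s_def a_def b_def l_def c_def K_def ir_def]
  let ?J = "contour_integral (circlepath 0 1) (Fint g r a b t n)"
  have Kp: "K \<ge> 0" "s \<ge> 0" using nf pos unfolding K_def by auto
  have "complex_of_real (bdPt p q r t n 0 - ir - c * l ^ (t + n)) = complex_of_real (s ^ n * K) * (1 / (2 * pi * \<i>)) * ?J"
    using mi by simp
  then have "\<bar>bdPt p q r t n 0 - ir - c * l ^ (t + n)\<bar> = norm (complex_of_real (s ^ n * K) * (1 / (2 * pi * \<i>)) * ?J)"
    by (metis norm_of_real)
  also have "\<dots> = s ^ n * K * (1 / (2 * pi)) * norm ?J"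
    using Kp by (simp add: norm_mult norm_divide norm_power)
  also have "\<dots> \<le> s ^ n * K * (1 / (2 * pi)) * (2 * (r + 2 * g) ^ t / ((1 - \<bar>a\<bar>) * (1 - \<bar>b\<bar>)) * (2 * pi * 1))"
    by (intro mult_left_mono Fint_bound) (use nf pos Kp in auto)
  also have "\<dots> = s ^ n * K * (2 * (r + 2 * g) ^ t / ((1 - a) * (1 + b)))"
    using nf by simp
  finally show ?thesis .
qed

end

context
  fixes p q r :: real
  assumes pos: "p > 0" "q > 0" "r > 0" and sum1: "p + q + r = 1" and qp: "q > p"
begin

lemma mc_lt1: "r + 2 * sqrt (p * q) < 1"
proof -
  obtain sp sq where f: "sp > 0" "sq > 0" "p = sp^2" "q = sq^2" "sp < sq"
    "sqrt (p*q) = sp * sq" "sqrt (p/q) = sp/sq" "sqrt (q/p) = sq/sp" by (rule sq_facts[OF pos sum1 qp])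
  have "0 < (sq - sp)^2" using f by simp
  then have "2 * (sp * sq) < sp^2 + sq^2" by (simp add: power2_eq_square algebra_simps)
  then show ?thesis using f sum1 by simp
qed

lemma l_abs: "\<bar>- q / (q + r)\<bar> < 1" "\<bar>- q / (q + r)\<bar> = q / (q + r)"
  using pos by auto

lemma atoms:
  assumes sm: "is_spectral_measure p q r \<psi>"
  shows "measure \<psi> {1} = (q - p) / (1 + q - p)" "measure \<psi> {-1} = 0"
proof -
  define g where "g \<equiv> sqrt (p*q)"
  define s where "s \<equiv> sqrt (q/p)"
  define a where "a \<equiv> sqrt (p/q)"
  define b where "b \<equiv> - sqrt (p/q) * q / (q + r)"
  define l where "l \<equiv> - q / (q + r)"
  define c where "c \<equiv> ((1 + q - p) * (q + r) - q) / ((1 + q - p) * (q + r))"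
  define K where "K \<equiv> p / (q + r)"
  define ir where "ir \<equiv> (q - p) / (1 + q - p)"
  note nf = numfacts[OF pos sum1 qp, folded g_def s_def a_def b_def l_def c_def K_def ir_def]
  have p0: "p \<noteq> 0" using pos by simp
  define u1 where "u1 = measure \<psi> {1}"
  define u2 where "u2 = measure \<psi> {-1}"
  have dec: "bdPt p q r t 0 0 = (LINT x:{-1<..<1}|\<psi>. x ^ t) + u1 + (-1) ^ t * u2" for t
  proof -
    have "bdPt p q r t 0 0 = (\<integral>x. x ^ t \<partial>\<psi>)" using KM[OF sm p0, of t 0] by simp
    also have "\<dots> = (LINT x:{-1<..<1}|\<psi>. x ^ t) + 1 ^ t * measure \<psi> {1} + (-1) ^ t * measure \<psi> {-1}"
      by (rule split_int[OF sm p0]) (intro continuous_intros)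
    finally show ?thesis by (simp add: u1_def u2_def)
  qed
  define C where "C = K * (2 / ((1 - a) * (1 + b)))"
  define m where "m = r + 2 * g"
  have m: "0 \<le> m" "m < 1" using mc_lt1 nf pos unfolding m_def g_def by auto
  have hb: "\<bar>bdPt p q r t 0 0 - ir\<bar> \<le> \<bar>c\<bar> * \<bar>l\<bar> ^ t + C * m ^ t" for t
  proof -
    have "\<bar>bdPt p q r t 0 0 - ir - c * l ^ (t + 0)\<bar> \<le> s ^ 0 * K * (2 * (r + 2 * g) ^ t / ((1 - a) * (1 + b)))"
      unfolding g_def s_def a_def b_def l_def c_def K_def ir_def by (rule Hbound[OF pos sum1 qp])
    then have "\<bar>bdPt p q r t 0 0 - ir - c * l ^ t\<bar> \<le> C * m ^ t" by (simp add: C_def m_def)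
    moreover have "\<bar>c * l ^ t\<bar> = \<bar>c\<bar> * \<bar>l\<bar> ^ t" by (simp add: abs_mult power_abs)
    ultimately show ?thesis by linarith
  qed
  have lim0: "(\<lambda>t. \<bar>c\<bar> * \<bar>l\<bar> ^ t + C * m ^ t) \<longlonglongrightarrow> \<bar>c\<bar> * 0 + C * 0"
    by (intro tendsto_intros LIMSEQ_realpow_zero) (use m l_abs nf in \<open>auto simp: l_def\<close>)
  have v: "(\<lambda>t. bdPt p q r t 0 0 - ir) \<longlonglongrightarrow> 0"
    by (rule Lim_null_comparison[OF _ lim0[simplified]]) (use hb in auto)
  have w: "(\<lambda>t. (bdPt p q r t 0 0 - ir) - (LINT x:{-1<..<1}|\<psi>. x ^ t)) \<longlonglongrightarrow> 0 - 0"
    by (intro tendsto_intros v lim_open[OF sm p0])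
  have u: "(\<lambda>t. u1 + (-1) ^ t * u2 - ir) \<longlonglongrightarrow> 0"
    using w by (simp add: dec algebra_simps)
  have "(\<lambda>t. u1 + (-1) ^ (2 * t) * u2 - ir) \<longlonglongrightarrow> 0"
    using LIMSEQ_subseq_LIMSEQ[OF u, of "\<lambda>t. 2 * t"] by (simp add: strict_mono_def o_def)
  then have e1: "u1 + u2 - ir = 0" by (simp add: LIMSEQ_const_iff)
  have "(\<lambda>t. u1 + (-1) ^ (2 * t + 1) * u2 - ir) \<longlonglongrightarrow> 0"
    using LIMSEQ_subseq_LIMSEQ[OF u, of "\<lambda>t. 2 * t + 1"] by (simp add: strict_mono_def o_def)
  then have e2: "u1 - u2 - ir = 0" by (simp add: LIMSEQ_const_iff)
  show "measure \<psi> {1} = (q - p) / (1 + q - p)" using e1 e2 unfolding u1_def ir_def by linarith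
  show "measure \<psi> {-1} = 0" using e1 e2 unfolding u2_def by linarith
qed

end

context
  fixes p q r :: real
  assumes pos: "p > 0" "q > 0" "r > 0" and sum1: "p + q + r = 1" and qp: "q > p"
begin

lemma part1:
  assumes sm: "is_spectral_measure p q r \<psi>"
  shows "complex_of_real (LINT x:{-1<..<1}|\<psi>. x ^ t * Qpoly p q r n x) =
    complex_of_real (((1 + q - p) * (q + r) - q) / ((1 + q - p) * (q + r)) * (- q / (q + r)) ^ (t + n))
    + complex_of_real (sqrt (q / p) ^ n * (p / (q + r))) * (1 / (2 * pi * \<i>)) *
      contour_integral (circlepath 0 1) (Fint (sqrt (p*q)) r (sqrt (p/q)) (- sqrt (p/q) * q / (q + r)) t n)"
proof -
  have p0: "p \<noteq> 0" using pos by simp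
  have "bdPt p q r t n 0 = (\<integral>x. x ^ t * Qpoly p q r n x \<partial>\<psi>)" by (rule KM[OF sm p0])
  also have "\<dots> = (LINT x:{-1<..<1}|\<psi>. x ^ t * Qpoly p q r n x) + 1 ^ t * Qpoly p q r n 1 * measure \<psi> {1}
      + (-1) ^ t * Qpoly p q r n (-1) * measure \<psi> {-1}"
    by (rule split_int[OF sm p0]) (intro continuous_intros Qpoly_cont[THEN continuous_on_subset], auto)
  also have "\<dots> = (LINT x:{-1<..<1}|\<psi>. x ^ t * Qpoly p q r n x) + (q - p) / (1 + q - p)"
    using atoms[OF pos sum1 qp sm] Qpoly_one[OF p0 sum1] by simp
  finally have e: "(LINT x:{-1<..<1}|\<psi>. x ^ t * Qpoly p q r n x) = bdPt p q r t n 0 - (q - p) / (1 + q - p)" by simp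
  show ?thesis unfolding e using main_id[OF pos sum1 qp, of t n] by simp
qed

lemma c_pos: "((1 + q - p) * (q + r) - q) / ((1 + q - p) * (q + r)) > 0"
proof -
  define X where "X = (1 + q - p) * (q + r)"
  have "X > 1 * (q + r)" unfolding X_def
    by (rule mult_strict_right_mono) (use pos qp in auto)
  then have "X > q + r" by simp
  then have "X - q > 0" using pos by linarith
  then have "(1 + q - p) * (q + r) - q > 0" unfolding X_def .
  moreover have "(1 + q - p) * (q + r) > 0" using pos qp by simp
  ultimately show ?thesis by simp
qed

lemma part2:
  "tv_dist p q r t \<le> ((1 + q - p) * (q + r) - q) / ((1 + q - p) * (1 - 2 * p)) * (q / (q + r)) ^ t
     + (p / (q + r) * (1 + 1 / (sqrt (p * q) - p))) / ((1 - sqrt (p / q) * (r + (1 + q - p)) / (2 * (q + r))) *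
              (1 + sqrt (p / q) * (r - (1 + q - p)) / (2 * (q + r)))) * (r + 2 * sqrt (p * q)) ^ t"
proof -
  define g where "g \<equiv> sqrt (p*q)"
  define s where "s \<equiv> sqrt (q/p)"
  define a where "a \<equiv> sqrt (p/q)"
  define b where "b \<equiv> - sqrt (p/q) * q / (q + r)"
  define l where "l \<equiv> - q / (q + r)"
  define c where "c \<equiv> ((1 + q - p) * (q + r) - q) / ((1 + q - p) * (q + r))"
  define K where "K \<equiv> p / (q + r)"
  define ir where "ir \<equiv> (q - p) / (1 + q - p)"
  note nf = numfacts[OF pos sum1 qp, folded g_def s_def a_def b_def l_def c_def K_def ir_def]
  define C where "C = K * (2 / ((1 - a) * (1 + b)))"
  define m where "m = r + 2 * g"
  define y where "y = q / (q + r)"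
  have y: "\<bar>l\<bar> = y" "y \<ge> 0" unfolding y_def l_def using pos qp by auto
  have "p / (q + r) < 1" using pos qp by simp
  then have "p / (q + r) * q < 1 * q" using pos by (intro mult_strict_right_mono) auto
  then have y3: "p * y < q" unfolding y_def by simp
  have c0: "c > 0" unfolding c_def by (rule c_pos)
  have Cm: "C * m ^ t \<ge> 0"
    unfolding C_def m_def K_def using nf pos by (intro mult_nonneg_nonneg) auto
  obtain sp sq where f: "sp > 0" "sq > 0" "p = sp^2" "q = sq^2" "sp < sq"
    "sqrt (p*q) = sp * sq" "sqrt (p/q) = sp/sq" "sqrt (q/p) = sq/sp" by (rule sq_facts[OF pos sum1 qp])
  have gq: "g < q" "p < g" unfolding g_def using f by (auto simp: power2_eq_square)
  have ps: "p * s < q" using nf gq by simp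
  have s0: "s \<ge> 0" using nf by simp
  define f where "f x = \<bar>nu p q x - mu p q r t x\<bar>" for x
  define G where "G x = (c * y ^ t) * (piw p q x * y ^ x) + (C * m ^ t) * (piw p q x * s ^ x)" for x
  have piw0: "piw p q x \<ge> 0" for x using pos by (simp add: piw_def)
  have fG: "f x \<le> G x" for x
  proof -
    have nu: "nu p q x = piw p q x * ir"
      unfolding nu_def rho_eq[OF pos sum1 qp] ir_def using qp by (simp add: field_simps)
    have "piw p q 0 * bdPt p q r t 0 x = piw p q x * bdPt p q r t x 0" by (rule piw_bdPt) (use pos in auto)
    then have mu: "mu p q r t x = piw p q x * bdPt p q r t x 0" by (simp add: mu_def piw_def)
    have "\<bar>bdPt p q r t x 0 - ir - c * l ^ (t + x)\<bar> \<le> s ^ x * K * (2 * (r + 2 * g) ^ t / ((1 - a) * (1 + b)))"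
      unfolding g_def s_def a_def b_def l_def c_def K_def ir_def by (rule Hbound[OF pos sum1 qp])
    also have "\<dots> = s ^ x * (C * m ^ t)" by (simp add: C_def m_def)
    finally have h: "\<bar>bdPt p q r t x 0 - ir - c * l ^ (t + x)\<bar> \<le> s ^ x * (C * m ^ t)" .
    have "\<bar>c * l ^ (t + x)\<bar> = c * y ^ t * y ^ x" using c0 y by (simp add: abs_mult power_abs power_add)
    with h have "\<bar>ir - bdPt p q r t x 0\<bar> \<le> c * y ^ t * y ^ x + s ^ x * (C * m ^ t)" by linarith
    then have "piw p q x * \<bar>ir - bdPt p q r t x 0\<bar> \<le> piw p q x * (c * y ^ t * y ^ x + s ^ x * (C * m ^ t))"
      by (rule mult_left_mono) (rule piw0)
    moreover have "f x = piw p q x * \<bar>ir - bdPt p q r t x 0\<bar>"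
      unfolding f_def nu mu using piw0[of x] by (simp add: abs_mult right_diff_distrib[symmetric])
    ultimately show ?thesis unfolding G_def by (simp add: algebra_simps)
  qed
  have Gs: "G sums ((c * y ^ t) * (1 + y / (q - p * y)) + (C * m ^ t) * (1 + s / (q - p * s)))"
    unfolding G_def by (intro sums_add sums_mult piw_sums) (use pos y y3 ps s0 in auto)
  have sf: "summable f"
    by (rule summable_comparison_test'[OF sums_summable[OF Gs]]) (use fG in \<open>auto simp: f_def\<close>)
  have "suminf f \<le> suminf G" by (rule suminf_le[OF fG sf sums_summable[OF Gs]])
  then have tv: "tv_dist p q r t \<le> (1/2) * ((c * y ^ t) * (1 + y / (q - p * y)) + (C * m ^ t) * (1 + s / (q - p * s)))"
    unfolding tv_dist_def f_def[symmetric] using sums_unique[OF Gs] by simp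
  have Aeq: "(1/2) * c * (1 + y / (q - p * y)) = ((1 + q - p) * (q + r) - q) / ((1 + q - p) * (1 - 2 * p))"
  proof -
    have qr: "q + r > 0" "1 + q - p > 0" "1 - 2 * p > 0" using pos qp sum1 by auto
    obtain D where D: "D = q + r" by blast
    have D0: "D > 0" "D - p > 0" "D - p = 1 - 2 * p" using D qr sum1 by auto
    have y': "y = q / D" unfolding y_def D ..
    have "q - p * (q / D) = q * (D - p) / D" using D0 by (simp add: field_simps)
    then have "y / (q - p * y) = (q / D) / (q * (D - p) / D)" unfolding y' by simp
    also have "\<dots> = 1 / (D - p)" using D0 pos by (simp add: field_simps)
    finally have e1: "y / (q - p * y) = 1 / (1 - 2 * p)" unfolding D0(3) .
    have e2: "1 - p = q + r" using sum1 by simp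
    have f1: "1 + 1 / (1 - 2 * p) = 2 * (q + r) / (1 - 2 * p)" using qr sum1
      by (simp add: field_simps)
    have aux: "N / (E * D) * D = N / E" if "D \<noteq> 0" for N E D :: real
      using that by (cases "E = 0") (simp_all add: field_simps)
    have f2: "c * (q + r) = ((1 + q - p) * (q + r) - q) / (1 + q - p)" unfolding c_def
      by (rule aux) (use qr in simp)
    have "(1/2) * c * (1 + y / (q - p * y)) = c * (q + r) / (1 - 2 * p)"
    proof -
      have aux2: "(1/2) * c' * (2 * Y / Z) = c' * Y / Z" for c' Y Z :: real
        by (cases "Z = 0") (simp_all add: field_simps)
      show ?thesis unfolding e1 f1 by (rule aux2)
    qed
    also have "\<dots> = ((1 + q - p) * (q + r) - q) / ((1 + q - p) * (1 - 2 * p))"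
      unfolding f2 by simp
    finally show ?thesis .
  qed
  have Beq: "(1/2) * C * (1 + s / (q - p * s)) = (p / (q + r) * (1 + 1 / (sqrt (p * q) - p))) / ((1 - sqrt (p / q) * (r + (1 + q - p)) / (2 * (q + r))) *
              (1 + sqrt (p / q) * (r - (1 + q - p)) / (2 * (q + r))))"
  proof -
    have e: "s / (q - p * s) = 1 / (g - p)"
    proof -
      have "s * (g - p) = q - g" using nf by (simp add: algebra_simps)
      then show ?thesis using gq nf by (simp add: field_simps)
    qed
    show ?thesis unfolding ap_eq[OF pos sum1 qp] am_eq[OF pos sum1 qp] e C_def K_def
      using nf by (simp add: g_def a_def b_def)
  qed
  have "(1/2) * ((c * y ^ t) * (1 + y / (q - p * y)) + (C * m ^ t) * (1 + s / (q - p * s)))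
      = ((1/2) * c * (1 + y / (q - p * y))) * y ^ t + ((1/2) * C * (1 + s / (q - p * s))) * m ^ t"
    by (simp add: algebra_simps)
  note eq' = this[unfolded Aeq Beq]
  have fin: "tv_dist p q r t \<le> ((1 + q - p) * (q + r) - q) / ((1 + q - p) * (1 - 2 * p)) * y ^ t
     + (p / (q + r) * (1 + 1 / (sqrt (p * q) - p))) / ((1 - sqrt (p / q) * (r + (1 + q - p)) / (2 * (q + r))) *
              (1 + sqrt (p / q) * (r - (1 + q - p)) / (2 * (q + r)))) * m ^ t"
    using tv unfolding eq' .
  show ?thesis using fin unfolding y_def m_def g_def .
qed

end

context
  fixes p q r :: real
  assumes pos: "p > 0" "q > 0" "r > 0" and sum1: "p + q + r = 1" and qp: "q > p"
begin

lemma part3: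
  fixes A B :: real
  assumes tvb: "\<And>t. tv_dist p q r t \<le> A * (q / (q + r)) ^ t + B * (r + 2 * sqrt (p * q)) ^ t"
    and A0: "A \<ge> 0" and B0: "B \<ge> 0"
  shows "(\<lambda>\<epsilon>. real (tmix p q r \<epsilon>)) \<in> O[at_right 0](\<lambda>\<epsilon>. ln \<epsilon> / ln (max (r + 2 * sqrt (p * q)) (q / (q + r))))"
proof -
  define M where "M = max (r + 2 * sqrt (p * q)) (q / (q + r))"
  define C where "C = A + B + 1"
  have y: "0 < q / (q + r)" "q / (q + r) < 1" using pos by auto
  have mc: "0 \<le> r + 2 * sqrt (p * q)" "r + 2 * sqrt (p * q) < 1" using mc_lt1[OF pos sum1 qp] pos by auto
  have M: "0 < M" "M < 1" unfolding M_def using y mc by auto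
  have C: "C \<ge> 1" unfolding C_def using A0 B0 by simp
  have tvC: "tv_dist p q r t \<le> C * M ^ t" for t
  proof -
    have "A * (q / (q + r)) ^ t \<le> A * M ^ t"
      by (intro mult_left_mono power_mono) (use y A0 in \<open>auto simp: M_def\<close>)
    moreover have "B * (r + 2 * sqrt (p * q)) ^ t \<le> B * M ^ t"
      by (intro mult_left_mono power_mono) (use mc B0 in \<open>auto simp: M_def\<close>)
    moreover have "0 \<le> M ^ t" using M by simp
    ultimately show ?thesis using tvb[of t] unfolding C_def by (simp add: algebra_simps)
  qed
  define LM where "LM = ln M"
  have LM: "LM < 0" unfolding LM_def using M by simp
  define k where "k = ln C / (- LM)"
  have k: "k \<ge> 0" unfolding k_def by (intro divide_nonneg_pos) (use C LM in auto)
  define \<delta> where "\<delta> = exp ((k + 1) * LM)"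
  have \<delta>: "0 < \<delta>" "\<delta> < 1" unfolding \<delta>_def using k LM by (auto simp: mult_pos_neg)
  have ev: "eventually (\<lambda>\<epsilon>. norm (real (tmix p q r \<epsilon>)) \<le> 2 * norm (ln \<epsilon> / LM)) (at_right 0)"
    unfolding eventually_at_right_field
  proof (intro exI[of _ \<delta>] conjI allI impI)
    show "\<delta> > 0" by (rule \<delta>)
    fix \<epsilon> :: real assume e0: "\<epsilon> > 0" and e1: "\<epsilon> < \<delta>"
    have "ln \<epsilon> < ln \<delta>" using e0 e1 by simp
    then have le: "ln \<epsilon> < (k + 1) * LM" unfolding \<delta>_def by simp
    define L where "L = ln \<epsilon> / LM"
    have L: "L > k + 1" unfolding L_def using le LM by (simp add: pos_less_divide_eq neg_less_divide_eq)
    define v where "v = (ln \<epsilon> - ln C) / LM"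
    have v: "v = L + k" unfolding v_def L_def k_def using LM by (simp add: diff_divide_distrib)
    define N where "N = nat (ceiling v)"
    have N1: "real N \<ge> v" unfolding N_def by linarith
    have N2: "real N \<le> v + 1" unfolding N_def using v k L by linarith
    have "M ^ N = exp (real N * LM)" unfolding LM_def using M by (simp add: exp_of_nat_mult)
    also have "\<dots> \<le> exp (v * LM)" using N1 LM by (simp add: mult_right_mono_neg)
    also have "v * LM = ln (\<epsilon> / C)" unfolding v_def using LM e0 C by (simp add: ln_div)
    also have "exp (ln (\<epsilon> / C)) = \<epsilon> / C" using e0 C by simp
    finally have "M ^ N \<le> \<epsilon> / C" .
    then have "C * M ^ N \<le> \<epsilon>" using C by (simp add: field_simps)
    then have "tv_dist p q r N \<le> \<epsilon>" using tvC[of N] by simp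
    then have "tmix p q r \<epsilon> \<le> N" unfolding tmix_def by (rule Least_le)
    then have "real (tmix p q r \<epsilon>) \<le> L + k + 1" using N2 v by linarith
    also have "\<dots> \<le> 2 * L" using L by simp
    finally have t2: "real (tmix p q r \<epsilon>) \<le> 2 * L" .
    have nL: "norm (ln \<epsilon> / LM) = L" unfolding real_norm_def L_def[symmetric] using L k by simp
    show "norm (real (tmix p q r \<epsilon>)) \<le> 2 * norm (ln \<epsilon> / LM)"
      unfolding nL using t2 by simp
  qed
  show ?thesis unfolding M_def[symmetric] LM_def[symmetric] by (rule bigoI[OF ev])
qed

end

theorem theorem1:
  fixes p q r :: real
  assumes "p > 0" "q > 0" "r > 0" "p + q + r = 1" "q > p"
  defines "ap \<equiv> sqrt (p / q) * (r + (1 + q - p)) / (2 * (q + r))"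
      and "am \<equiv> sqrt (p / q) * (r - (1 + q - p)) / (2 * (q + r))"
      and "A \<equiv> ((1 + q - p) * (q + r) - q) / ((1 + q - p) * (1 - 2 * p))"
      and "B \<equiv> (p / (q + r) * (1 + 1 / (sqrt (p * q) - p))) / ((1 - sqrt (p / q) * (r + (1 + q - p)) / (2 * (q + r))) *
              (1 + sqrt (p / q) * (r - (1 + q - p)) / (2 * (q + r))))"
      and "m \<equiv> max (r + 2 * sqrt (p * q)) (q / (q + r))"
  shows "(\<forall>\<psi> t n. is_spectral_measure p q r \<psi> \<longrightarrow>
            complex_of_real (LINT x:{-1<..<1}|\<psi>. x ^ t * Qpoly p q r n x) =
              complex_of_real (((1 + q - p) * (q + r) - q) / ((1 + q - p) * (q + r))
                               * (- q / (q + r)) ^ (t + n))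
              + complex_of_real (sqrt (q / p) ^ n * (p / (q + r)))
                * (1 / (2 * pi * \<i>)) *
                contour_integral (circlepath 0 1)
                  (\<lambda>z. (complex_of_real (sqrt (p * q)) * (z + inverse z) + complex_of_real r) ^ t
                        * z ^ n * (z - inverse z)
                        / ((z - complex_of_real ap) * (z - complex_of_real am))))
       \<and> (\<forall>t. tv_dist p q r t \<le> A * (q / (q + r)) ^ t + B * (r + 2 * sqrt (p * q)) ^ t)
       \<and> (\<lambda>\<epsilon>. real (tmix p q r \<epsilon>)) \<in> O[at_right 0](\<lambda>\<epsilon>. ln \<epsilon> / ln m)"
proof -
  note pos = assms(1,2,3) and sum1 = assms(4) and qp = assms(5)
  have apE: "ap = sqrt (p/q)" unfolding ap_def by (rule ap_eq[OF pos sum1 qp])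
  have amE: "am = - sqrt (p/q) * q / (q + r)" unfolding am_def by (rule am_eq[OF pos sum1 qp])
  have P1: "\<forall>\<psi> t n. is_spectral_measure p q r \<psi> \<longrightarrow>
            complex_of_real (LINT x:{-1<..<1}|\<psi>. x ^ t * Qpoly p q r n x) =
              complex_of_real (((1 + q - p) * (q + r) - q) / ((1 + q - p) * (q + r))
                               * (- q / (q + r)) ^ (t + n))
              + complex_of_real (sqrt (q / p) ^ n * (p / (q + r)))
                * (1 / (2 * pi * \<i>)) *
                contour_integral (circlepath 0 1)
                  (\<lambda>z. (complex_of_real (sqrt (p * q)) * (z + inverse z) + complex_of_real r) ^ t
                        * z ^ n * (z - inverse z)
                        / ((z - complex_of_real ap) * (z - complex_of_real am)))"
  proof (intro allI impI)
    fix \<psi> t n assume sm: "is_spectral_measure p q r \<psi>"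
    show "complex_of_real (LINT x:{-1<..<1}|\<psi>. x ^ t * Qpoly p q r n x) =
              complex_of_real (((1 + q - p) * (q + r) - q) / ((1 + q - p) * (q + r))
                               * (- q / (q + r)) ^ (t + n))
              + complex_of_real (sqrt (q / p) ^ n * (p / (q + r)))
                * (1 / (2 * pi * \<i>)) *
                contour_integral (circlepath 0 1)
                  (\<lambda>z. (complex_of_real (sqrt (p * q)) * (z + inverse z) + complex_of_real r) ^ t
                        * z ^ n * (z - inverse z)
                        / ((z - complex_of_real ap) * (z - complex_of_real am)))"
      using part1[OF pos sum1 qp sm, of t n] unfolding apE amE Fint_def .
  qed
  have P2: "\<forall>t. tv_dist p q r t \<le> A * (q / (q + r)) ^ t + B * (r + 2 * sqrt (p * q)) ^ t"
    unfolding A_def B_def using part2[OF pos sum1 qp] by blast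
  have A0: "A \<ge> 0"
  proof -
    have "((1 + q - p) * (q + r) - q) / ((1 + q - p) * (q + r)) > 0" by (rule c_pos[OF pos sum1 qp])
    moreover have "(1 + q - p) * (q + r) > 0" using pos qp by simp
    ultimately have "(1 + q - p) * (q + r) - q > 0" by (simp add: zero_less_divide_iff)
    moreover have "(1 + q - p) * (1 - 2 * p) > 0" using pos qp sum1 by simp
    ultimately show ?thesis unfolding A_def by simp
  qed
  have B0: "B \<ge> 0"
  proof -
    obtain sp sq where f: "sp > 0" "sq > 0" "p = sp^2" "q = sq^2" "sp < sq"
      "sqrt (p*q) = sp * sq" "sqrt (p/q) = sp/sq" "sqrt (q/p) = sq/sp" by (rule sq_facts[OF pos sum1 qp])
    have gp: "sqrt (p * q) - p > 0" using f by (simp add: power2_eq_square)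
    note nf = numfacts[OF pos sum1 qp]
    have d1: "1 - sqrt (p / q) * (r + (1 + q - p)) / (2 * (q + r)) > 0"
      using ap_eq[OF pos sum1 qp] nf by simp
    have d2: "1 + sqrt (p / q) * (r - (1 + q - p)) / (2 * (q + r)) > 0"
      using am_eq[OF pos sum1 qp] nf by simp
    have "p / (q + r) * (1 + 1 / (sqrt (p * q) - p)) \<ge> 0" using pos gp by simp
    then show ?thesis unfolding B_def by (intro divide_nonneg_pos mult_pos_pos d1 d2)
  qed
  have P3: "(\<lambda>\<epsilon>. real (tmix p q r \<epsilon>)) \<in> O[at_right 0](\<lambda>\<epsilon>. ln \<epsilon> / ln m)"
    unfolding m_def by (rule part3[OF pos sum1 qp, of A B]) (use P2 A0 B0 in auto)
  show ?thesis using P1 P2 P3 by blast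
qed


end
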